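(* Let $\mathcal L:\mathbb R^V\supset\mathrm{Dom}(\mathcal L)\to\mathbb R^V$ be a linear operator with $\mathcal C_{\mathrm{fs}}(\mathcal G)\subset\mathrm{Dom}(\mathcal L)$ such that (1) $\mathcal L$ is a rough differential operator, and (2) $\mathcal L$ satisfies a two-sided rough comparison principle. Then ${}^{\mathcal O}\mathrm{Ric}_{\mathcal L}(x,y)$ is finite for all distinct $x,y\in V$.
   Context: $\mathcal G$ is a locally finite graph with vertex set $V$ and a distance $\mathrm d$ on $V$ with $(V,\mathrm d)$ complete. $\mathcal C_{\mathrm{fs}}(\mathcal G)$ = finitely supported functions on $V$; $\mathrm{Lip}(1)$ = functions with $|f(u)-f(v)|\le\mathrm d(u,v)$; $\nabla_{xy}f=(f(y)-f(x))/\mathrm d(x,y)$. The operator-theoretic Ollivier–Ricci curvature is \[ {}^{\mathcal O}\mathrm{Ric}_{\mathcal L}(x,y):=\inf\{\nabla_{yx}\mathcal Lf:\ f\in\mathcal C_{\mathrm{fs}}(\mathcal G)\cap\mathrm{Lip}(1),\ \nabla_{xy}f=1\}. \] $\mathcal L$ is a rough differential operator if constants lie in its domain and kernel ($\mathcal L1=0$). $\mathcal L$ satisfies a two-sided rough comparison principle if there is a function $C:V\to[0,\infty)$ such that for every $f\in\mathrm{Dom}(\mathcal L)\cap\mathrm{Lip}(1)$ having a global minimum at $x$, $|\mathcal Lf(x)|\le C(x)$. *)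

theory Defs
  imports Complex_Main "HOL-Library.Extended_Real"
begin

text \<open>Vertex set V is the (arbitrary) type 'v; the graph is a symmetric,
irreflexive, locally finite edge relation E.\<close>

definition locally_finite_graph :: "('v \<Rightarrow> 'v \<Rightarrow> bool) \<Rightarrow> bool" where
  "locally_finite_graph E \<longleftrightarrow>
     (\<forall>x y. E x y \<longrightarrow> E y x) \<and> (\<forall>x. \<not> E x x) \<and> (\<forall>x. finite {y. E x y})"

definition is_metric :: "('v \<Rightarrow> 'v \<Rightarrow> real) \<Rightarrow> bool" where
  "is_metric d \<longleftrightarrow>
     (\<forall>x y. 0 \<le> d x y) \<and> (\<forall>x y. d x y = 0 \<longleftrightarrow> x = y) \<and>
     (\<forall>x y. d x y = d y x) \<and> (\<forall>x y z. d x z \<le> d x y + d y z)"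

definition complete_dist :: "('v \<Rightarrow> 'v \<Rightarrow> real) \<Rightarrow> bool" where
  "complete_dist d \<longleftrightarrow>
     (\<forall>X :: nat \<Rightarrow> 'v.
        (\<forall>e>0. \<exists>N. \<forall>m\<ge>N. \<forall>n\<ge>N. d (X m) (X n) < e) \<longrightarrow>
        (\<exists>l. \<forall>e>0. \<exists>N. \<forall>n\<ge>N. d (X n) l < e))"

definition walk :: "('v \<Rightarrow> 'v \<Rightarrow> bool) \<Rightarrow> 'v list \<Rightarrow> bool" where
  "walk E xs \<longleftrightarrow> xs \<noteq> [] \<and> (\<forall>i. Suc i < length xs \<longrightarrow> E (xs ! i) (xs ! Suc i))"

definition walk_length :: "('v \<Rightarrow> 'v \<Rightarrow> real) \<Rightarrow> 'v list \<Rightarrow> real" where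
  "walk_length d xs = (\<Sum>i<length xs - 1. d (xs ! i) (xs ! Suc i))"

definition graph_distance :: "('v \<Rightarrow> 'v \<Rightarrow> bool) \<Rightarrow> ('v \<Rightarrow> 'v \<Rightarrow> real) \<Rightarrow> bool" where
  "graph_distance E d \<longleftrightarrow> is_metric d \<and>
     (\<forall>x y. (\<exists>xs. walk E xs \<and> hd xs = x \<and> last xs = y) \<and>
            d x y = Inf {walk_length d xs | xs. walk E xs \<and> hd xs = x \<and> last xs = y})"

definition finitely_supported :: "('v \<Rightarrow> real) \<Rightarrow> bool" where
  "finitely_supported f \<longleftrightarrow> finite {v. f v \<noteq> 0}"

definition lip1 :: "('v \<Rightarrow> 'v \<Rightarrow> real) \<Rightarrow> ('v \<Rightarrow> real) \<Rightarrow> bool" where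
  "lip1 d f \<longleftrightarrow> (\<forall>u v. \<bar>f u - f v\<bar> \<le> d u v)"

definition nabla :: "('v \<Rightarrow> 'v \<Rightarrow> real) \<Rightarrow> 'v \<Rightarrow> 'v \<Rightarrow> ('v \<Rightarrow> real) \<Rightarrow> real" where
  "nabla d x y f = (f y - f x) / d x y"

text \<open>Operator Ollivier--Ricci curvature, as an extended real (Inf of the empty set is +\<infinity>).\<close>

definition ORic :: "('v \<Rightarrow> 'v \<Rightarrow> real) \<Rightarrow> (('v \<Rightarrow> real) \<Rightarrow> ('v \<Rightarrow> real)) \<Rightarrow> 'v \<Rightarrow> 'v \<Rightarrow> ereal" where
  "ORic d L x y = Inf {ereal (nabla d y x (L f)) | f.
      finitely_supported f \<and> lip1 d f \<and> nabla d x y f = 1}"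

definition linear_operator :: "('v \<Rightarrow> real) set \<Rightarrow> (('v \<Rightarrow> real) \<Rightarrow> ('v \<Rightarrow> real)) \<Rightarrow> bool" where
  "linear_operator Dom L \<longleftrightarrow>
     (\<lambda>_. 0) \<in> Dom \<and>
     (\<forall>f\<in>Dom. \<forall>g\<in>Dom. (\<lambda>v. f v + g v) \<in> Dom \<and> L (\<lambda>v. f v + g v) = (\<lambda>v. L f v + L g v)) \<and>
     (\<forall>f\<in>Dom. \<forall>c::real. (\<lambda>v. c * f v) \<in> Dom \<and> L (\<lambda>v. c * f v) = (\<lambda>v. c * L f v))"

definition rough_differential_operator :: "('v \<Rightarrow> real) set \<Rightarrow> (('v \<Rightarrow> real) \<Rightarrow> ('v \<Rightarrow> real)) \<Rightarrow> bool" where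
  "rough_differential_operator Dom L \<longleftrightarrow> (\<forall>c::real. (\<lambda>_. c) \<in> Dom) \<and> L (\<lambda>_. 1) = (\<lambda>_. 0)"

definition two_sided_rough_comparison ::
  "('v \<Rightarrow> 'v \<Rightarrow> real) \<Rightarrow> ('v \<Rightarrow> real) set \<Rightarrow> (('v \<Rightarrow> real) \<Rightarrow> ('v \<Rightarrow> real)) \<Rightarrow> bool" where
  "two_sided_rough_comparison d Dom L \<longleftrightarrow>
     (\<exists>C :: 'v \<Rightarrow> real. (\<forall>x. 0 \<le> C x) \<and>
        (\<forall>f x. f \<in> Dom \<and> lip1 d f \<and> (\<forall>v. f x \<le> f v) \<longrightarrow> \<bar>L f x\<bar> \<le> C x))"

end

theory Submission
  imports Defs
begin

lemma walk_cons2: "walk E (u # w # rest) \<longleftrightarrow> E u w \<and> walk E (w # rest)"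
proof
  assume h: "walk E (u # w # rest)"
  have "Suc 0 < length (u # w # rest)" by simp
  then have "E ((u # w # rest) ! 0) ((u # w # rest) ! Suc 0)" using h unfolding walk_def by blast
  then have "E u w" by simp
  moreover have "walk E (w # rest)" unfolding walk_def
  proof (intro conjI allI impI)
    fix i assume "Suc i < length (w # rest)"
    then have "Suc (Suc i) < length (u # w # rest)" by simp
    with h have "E ((u # w # rest) ! Suc i) ((u # w # rest) ! Suc (Suc i))" unfolding walk_def by blast
    then show "E ((w # rest) ! i) ((w # rest) ! Suc i)" by simp
  qed simp
  ultimately show "E u w \<and> walk E (w # rest)" by blast
next
  assume h: "E u w \<and> walk E (w # rest)"
  show "walk E (u # w # rest)" unfolding walk_def
  proof (intro conjI allI impI)
    fix i assume i: "Suc i < length (u # w # rest)"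
    show "E ((u # w # rest) ! i) ((u # w # rest) ! Suc i)"
    proof (cases i)
      case 0 then show ?thesis using h by simp
    next
      case (Suc j)
      then have "Suc j < length (w # rest)" using i by simp
      with h have "E ((w # rest) ! j) ((w # rest) ! Suc j)" unfolding walk_def by blast
      then show ?thesis using Suc by simp
    qed
  qed simp
qed

lemma walk_length_single: "walk_length d [u] = 0"
  by (simp add: walk_length_def)

lemma walk_length_cons2: "walk_length d (u # w # rest) = d u w + walk_length d (w # rest)"
proof -
  have "walk_length d (u#w#rest) = (\<Sum>i<Suc (length rest). d ((u#w#rest)!i) ((u#w#rest)!Suc i))"
    by (simp add: walk_length_def del: sum.lessThan_Suc)
  also have "\<dots> = d u w + (\<Sum>i<length rest. d ((w#rest)!i) ((w#rest)!Suc i))"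
    by (subst sum.lessThan_Suc_shift) simp
  also have "\<dots> = d u w + walk_length d (w#rest)" by (simp add: walk_length_def)
  finally show ?thesis .
qed

lemma walk_length_nonneg:
  assumes "\<forall>x y. 0 \<le> d x y" shows "0 \<le> walk_length d xs"
  unfolding walk_length_def using assms by (simp add: sum_nonneg)

definition reach :: "('v \<Rightarrow> 'v \<Rightarrow> bool) \<Rightarrow> ('v \<Rightarrow> 'v \<Rightarrow> real) \<Rightarrow> 'v \<Rightarrow> real \<Rightarrow> 'v set" where
  "reach E d u r = {v. \<exists>xs. walk E xs \<and> hd xs = u \<and> last xs = v \<and> walk_length d xs < r}"

lemma reach_decomp:
  "reach E d u r \<subseteq> insert u (\<Union>w\<in>{w. E u w}. reach E d w (r - d u w))"
proof
  fix v assume "v \<in> reach E d u r"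
  then obtain xs where xs: "walk E xs" "hd xs = u" "last xs = v" "walk_length d xs < r"
    unfolding reach_def by blast
  show "v \<in> insert u (\<Union>w\<in>{w. E u w}. reach E d w (r - d u w))"
  proof (cases xs)
    case Nil then show ?thesis using xs by (simp add: walk_def)
  next
    case (Cons a ys)
    show ?thesis
    proof (cases ys)
      case Nil then show ?thesis using xs Cons by simp
    next
      case (Cons w rest)
      have xe: "xs = u # w # rest" using xs(2) \<open>xs = a # ys\<close> Cons by simp
      have "walk E (u # w # rest)" using xs(1) xe by simp
      then have "E u w" "walk E (w # rest)" by (simp_all only: walk_cons2)
      moreover have "walk_length d (w # rest) < r - d u w"
        using xs(4) xe walk_length_cons2[of d u w rest] by simp
      moreover have "last (w # rest) = v" using xs(3) xe by simp
      moreover have "hd (w # rest) = w" by simp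
      ultimately have "v \<in> reach E d w (r - d u w)" unfolding reach_def
        by blast
      then show ?thesis using \<open>E u w\<close> by blast
    qed
  qed
qed

lemma reach_step:
  assumes "locally_finite_graph E" "infinite (reach E d u r)"
  shows "\<exists>w. E u w \<and> infinite (reach E d w (r - d u w))"
proof (rule ccontr)
  assume "\<not> ?thesis"
  then have "\<forall>w\<in>{w. E u w}. finite (reach E d w (r - d u w))" by blast
  moreover have "finite {w. E u w}" using assms(1) unfolding locally_finite_graph_def by blast
  ultimately have "finite (\<Union>w\<in>{w. E u w}. reach E d w (r - d u w))" by (simp add: finite_UN)
  then have "finite (insert u (\<Union>w\<in>{w. E u w}. reach E d w (r - d u w)))" by (rule finite.insertI)
  then show False using reach_decomp[of E d u r] assms(2) finite_subset by blast
qed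


lemma metric_facts:
  assumes "graph_distance E d"
  shows "\<forall>x y. 0 \<le> d x y" "\<forall>x y. d x y = 0 \<longleftrightarrow> x = y" "\<forall>x y. d x y = d y x"
    "\<forall>x y z. d x z \<le> d x y + d y z"
  using assms unfolding graph_distance_def is_metric_def by blast+

lemma separation:
  assumes lf: "locally_finite_graph E" and gd: "graph_distance E d"
  shows "\<exists>\<delta>>0. \<forall>v. v \<noteq> l \<longrightarrow> \<delta> \<le> d l v"
proof -
  note mf = metric_facts[OF gd]
  have irr: "\<forall>x. \<not> E x x" and fin: "finite {w. E l w}"
    using lf unfolding locally_finite_graph_def by blast+
  define \<delta> where "\<delta> = (if {w. E l w} = {} then 1 else Min (d l ` {w. E l w}))"
  have pos: "\<delta> > 0"
  proof (cases "{w. E l w} = {}")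
    case True then show ?thesis by (simp add: \<delta>_def)
  next
    case False
    have "\<forall>a\<in>d l ` {w. E l w}. 0 < a"
    proof
      fix a assume "a \<in> d l ` {w. E l w}"
      then obtain w where "E l w" "a = d l w" by blast
      then have "w \<noteq> l" using irr by blast
      then show "0 < a" using mf(1,2) \<open>a = d l w\<close> by (metis less_eq_real_def)
    qed
    then show ?thesis using False fin by (simp add: \<delta>_def Min_gr_iff)
  qed
  have le: "\<delta> \<le> d l w" if "E l w" for w
  proof -
    have "{w. E l w} \<noteq> {}" using that by blast
    then have "\<delta> = Min (d l ` {w. E l w})" unfolding \<delta>_def by (simp only: if_False)
    also have "\<dots> \<le> d l w" using fin that by (intro Min_le) auto
    finally show ?thesis .
  qed
  have "\<delta> \<le> d l v" if "v \<noteq> l" for v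
  proof -
    let ?S = "{walk_length d xs | xs. walk E xs \<and> hd xs = l \<and> last xs = v}"
    have ex: "\<exists>xs. walk E xs \<and> hd xs = l \<and> last xs = v" and dv: "d l v = Inf ?S"
      using gd unfolding graph_distance_def by blast+
    have ne: "?S \<noteq> {}" using ex by blast
    have "\<forall>s\<in>?S. \<delta> \<le> s"
    proof
      fix s assume "s \<in> ?S"
      then obtain xs where xs: "walk E xs" "hd xs = l" "last xs = v" "s = walk_length d xs" by blast
      show "\<delta> \<le> s"
      proof (cases xs)
        case Nil then show ?thesis using xs by (simp add: walk_def)
      next
        case (Cons a ys)
        show ?thesis
        proof (cases ys)
          case Nil then show ?thesis using xs Cons \<open>xs = a # ys\<close> that by simp
        next
          case (Cons w rest)
          have xe: "xs = l # w # rest" using xs(2) \<open>xs = a # ys\<close> Cons by simp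
          have "walk E (l # w # rest)" using xs(1) xe by simp
          then have "E l w" by (simp only: walk_cons2)
          have "s = d l w + walk_length d (w # rest)" using xs(4) xe walk_length_cons2 by simp
          moreover have "0 \<le> walk_length d (w # rest)" using walk_length_nonneg mf(1) by blast
          ultimately show ?thesis using le[OF \<open>E l w\<close>] by linarith
        qed
      qed
    qed
    then show ?thesis using cInf_greatest[OF ne] dv by simp
  qed
  then show ?thesis using pos by blast
qed

lemma ball_reach:
  assumes gd: "graph_distance E d" and "d y v < r"
  shows "v \<in> reach E d y r"
proof -
  let ?S = "{walk_length d xs | xs. walk E xs \<and> hd xs = y \<and> last xs = v}"
  have ex: "\<exists>xs. walk E xs \<and> hd xs = y \<and> last xs = v" and dv: "d y v = Inf ?S"
    using gd unfolding graph_distance_def by blast+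
  have ne: "?S \<noteq> {}" using ex by blast
  have "Inf ?S < r" using dv assms(2) by simp
  then obtain s where "s \<in> ?S" "s < r" using cInf_lessD[OF ne] by blast
  then show ?thesis unfolding reach_def by blast
qed


lemma reach_finite:
  assumes lf: "locally_finite_graph E" and gd: "graph_distance E d" and cd: "complete_dist d"
  shows "finite (reach E d y0 r0)"
proof (rule ccontr)
  assume inf0: "infinite (reach E d y0 r0)"
  note mf = metric_facts[OF gd]
  have irr: "\<forall>x. \<not> E x x" using lf unfolding locally_finite_graph_def by blast
  define Q where "Q = (\<lambda>(p::'a\<times>real) (q::'a\<times>real). E (fst p) (fst q) \<and>
      snd q = snd p - d (fst p) (fst q) \<and> infinite (reach E d (fst q) (snd q)))"
  define st where "st = (\<lambda>p. SOME q. Q p q)"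
  define sq where "sq = (\<lambda>n. (st ^^ n) (y0, r0))"
  define u where "u = (\<lambda>n. fst (sq n))"
  define r where "r = (\<lambda>n. snd (sq n))"
  have sqS: "sq (Suc n) = st (sq n)" for n by (simp add: sq_def)
  have stepQ: "Q (sq n) (sq (Suc n))" if infn: "infinite (reach E d (u n) (r n))" for n
  proof -
    obtain w where "E (u n) w \<and> infinite (reach E d w (r n - d (u n) w))"
      using reach_step[OF lf infn] by blast
    then have "Q (sq n) (w, r n - d (u n) w)" by (simp add: Q_def u_def r_def)
    then have "Q (sq n) (st (sq n))" unfolding st_def by (rule someI)
    then show ?thesis using sqS by simp
  qed
  have inf: "infinite (reach E d (u n) (r n))" for n
  proof (induction n)
    case 0 show ?case using inf0 by (simp add: u_def r_def sq_def)
  next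
    case (Suc n)
    from stepQ[OF Suc.IH] show ?case unfolding Q_def u_def r_def by blast
  qed
  have stp: "E (u n) (u (Suc n)) \<and> r (Suc n) = r n - d (u n) (u (Suc n))" for n
    using stepQ[OF inf[of n]] by (simp add: Q_def u_def r_def)
  have rpos: "0 < r n" for n
  proof -
    have "reach E d (u n) (r n) \<noteq> {}" using inf[of n] by auto
    then obtain v where "v \<in> reach E d (u n) (r n)" by blast
    then obtain xs where "walk_length d xs < r n" unfolding reach_def by blast
    moreover have "0 \<le> walk_length d xs" using walk_length_nonneg mf(1) by blast
    ultimately show ?thesis by linarith
  qed
  have dec: "decseq r"
  proof (rule decseq_SucI)
    fix n show "r (Suc n) \<le> r n" using stp[of n] mf(1) by auto
  qed
  obtain Lr where "r \<longlonglongrightarrow> Lr"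
    using decseq_convergent[OF dec, of 0] rpos by (metis less_imp_le)
  then have Cr: "Cauchy r" by (rule LIMSEQ_imp_Cauchy)
  have dle: "d (u m) (u (m + k)) \<le> r m - r (m + k)" for m k
  proof (induction k)
    case 0 then show ?case using mf(2) by (metis add_0_right diff_self order_refl)
  next
    case (Suc k)
    have "d (u m) (u (m + Suc k)) \<le> d (u m) (u (m + k)) + d (u (m + k)) (u (Suc (m + k)))"
      using mf(4) by simp
    then show ?case using Suc.IH stp[of "m + k"] by simp
  qed
  have cu: "\<forall>e>0. \<exists>N. \<forall>m\<ge>N. \<forall>n\<ge>N. d (u m) (u n) < e"
  proof (intro allI impI)
    fix e :: real assume "e > 0"
    then obtain M where M: "\<forall>m\<ge>M. \<forall>n\<ge>M. dist (r m) (r n) < e"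
      using metric_CauchyD[OF Cr] by blast
    have "\<forall>m\<ge>M. \<forall>n\<ge>M. d (u m) (u n) < e"
    proof (intro allI impI)
      fix m n assume mn: "m \<ge> M" "n \<ge> M"
      have dd: "\<bar>r m - r n\<bar> < e" using M mn by (simp add: dist_real_def)
      show "d (u m) (u n) < e"
      proof (cases "m \<le> n")
        case True
        then obtain k where "n = m + k" using le_Suc_ex by blast
        then have "d (u m) (u n) \<le> r m - r n" using dle by simp
        then show ?thesis using dd by linarith
      next
        case False
        then obtain k where "m = n + k" using le_Suc_ex[of n m] by auto
        then have "d (u n) (u m) \<le> r n - r m" using dle by simp
        then show ?thesis using dd mf(3) by (metis abs_minus_commute abs_ge_self order.strict_trans1 order_trans)
      qed
    qed
    then show "\<exists>N. \<forall>m\<ge>N. \<forall>n\<ge>N. d (u m) (u n) < e" by blast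
  qed
  obtain l where l: "\<forall>e>0. \<exists>N. \<forall>n\<ge>N. d (u n) l < e"
    using cd cu unfolding complete_dist_def by blast
  obtain \<delta> where del: "\<delta> > 0" "\<forall>v. v \<noteq> l \<longrightarrow> \<delta> \<le> d l v"
    using separation[OF lf gd] by blast
  obtain N where N: "\<forall>n\<ge>N. d (u n) l < \<delta>" using l del(1) by blast
  have ul: "u n = l" if "n \<ge> N" for n
  proof (rule ccontr)
    assume "u n \<noteq> l"
    then have "\<delta> \<le> d l (u n)" using del(2) by auto
    moreover have "d (u n) l < \<delta>" using N that by blast
    ultimately show False using mf(3) by (metis not_le)
  qed
  have "E (u N) (u (Suc N))" using stp by blast
  then show False using ul[of N] ul[of "Suc N"] irr by simp
qed


lemma lin_add:
  assumes lin: "linear_operator Dom L" and f: "f \<in> Dom" and g: "g \<in> Dom"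
  shows "(\<lambda>v. f v + g v) \<in> Dom \<and> L (\<lambda>v. f v + g v) = (\<lambda>v. L f v + L g v)"
proof -
  have H: "\<forall>f\<in>Dom. \<forall>g\<in>Dom. (\<lambda>v. f v + g v) \<in> Dom \<and> L (\<lambda>v. f v + g v) = (\<lambda>v. L f v + L g v)"
    using lin unfolding linear_operator_def by (elim conjE)
  show ?thesis using bspec[OF bspec[OF H f] g] .
qed

lemma lin_scale:
  assumes lin: "linear_operator Dom L" and f: "f \<in> Dom"
  shows "(\<lambda>v. c * f v) \<in> Dom \<and> L (\<lambda>v. c * f v) = (\<lambda>v. c * L f v)"
proof -
  have H: "\<forall>f\<in>Dom. \<forall>c::real. (\<lambda>v. c * f v) \<in> Dom \<and> L (\<lambda>v. c * f v) = (\<lambda>v. c * L f v)"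
    using lin unfolding linear_operator_def by (elim conjE)
  show ?thesis using spec[OF bspec[OF H f], of c] .
qed

lemma lin_diff:
  assumes lin: "linear_operator Dom L" and f: "f \<in> Dom" and g: "g \<in> Dom"
  shows "(\<lambda>v. f v - g v) \<in> Dom \<and> L (\<lambda>v. f v - g v) = (\<lambda>v. L f v - L g v)"
proof -
  note g1 = lin_scale[OF lin g, of "-1"]
  have gD: "(\<lambda>v. (-1) * g v) \<in> Dom" using g1 by (elim conjE)
  note A = lin_add[OF lin f gD]
  have e1: "(\<lambda>v. f v + (-1) * g v) = (\<lambda>v. f v - g v)" by simp
  have e2: "(\<lambda>v. L f v + L (\<lambda>v. (-1) * g v) v) = (\<lambda>v. L f v - L g v)" using g1 by simp
  show ?thesis using A unfolding e1 e2 .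
qed

lemma lin_const:
  assumes lin: "linear_operator Dom L" and rd: "rough_differential_operator Dom L"
  shows "(\<lambda>_. c) \<in> Dom \<and> L (\<lambda>_. c) = (\<lambda>_. 0)"
proof -
  have one: "(\<lambda>_. 1) \<in> Dom" "L (\<lambda>_. 1) = (\<lambda>_. 0)" using rd unfolding rough_differential_operator_def by blast+
  note X = lin_scale[OF lin one(1), of c]
  have e: "(\<lambda>v. c * 1) = (\<lambda>_. c)" by simp
  have e2: "(\<lambda>v. c * L (\<lambda>_. 1) v) = (\<lambda>_. 0)" using one(2) by simp
  show ?thesis using X unfolding e e2 .
qed

lemma max0_lip: "\<bar>max a (0::real) - max b 0\<bar> \<le> \<bar>a - b\<bar>"
  by (cases "a \<le> 0"; cases "b \<le> 0"; simp add: max_def abs_le_iff)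

lemma comparison_bound:
  assumes lin: "linear_operator Dom L" and fsD: "{f. finitely_supported f} \<subseteq> Dom"
    and rd: "rough_differential_operator Dom L"
    and cmp: "\<forall>f x. f \<in> Dom \<and> lip1 d f \<and> (\<forall>v. f x \<le> f v) \<longrightarrow> \<bar>L f x\<bar> \<le> C x"
    and ffs: "finitely_supported f" and fl: "lip1 d f"
  shows "\<bar>L f z\<bar> \<le> 2 * C z"
proof -
  define c where "c = f z"
  define p where "p = (\<lambda>v. max (f v - c) 0)"
  define q where "q = (\<lambda>v. max (c - f v) 0)"
  have fD: "f \<in> Dom" using fsD ffs by blast
  note cst = lin_const[OF lin rd, of c]
  have key: "p \<in> Dom \<and> q \<in> Dom \<and> L f z = L p z - L q z"
  proof (cases "c \<ge> 0")
    case True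
    have "{v. p v \<noteq> 0} \<subseteq> {v. f v \<noteq> 0}" using True by (auto simp: p_def)
    then have "finitely_supported p" using ffs unfolding finitely_supported_def by (rule finite_subset)
    then have pD: "p \<in> Dom" using fsD by blast
    have cp: "(\<lambda>v. c + p v) \<in> Dom \<and> L (\<lambda>v. c + p v) = (\<lambda>v. 0 + L p v)"
      using lin_add[OF lin _ pD, of "\<lambda>_. c"] cst by simp
    have qeq: "q = (\<lambda>v. (c + p v) - f v)" unfolding p_def q_def fun_eq_iff by (simp add: max_def)
    have "(\<lambda>v. (c + p v) - f v) \<in> Dom \<and> L (\<lambda>v. (c + p v) - f v) = (\<lambda>v. L (\<lambda>v. c + p v) v - L f v)"
      using lin_diff[OF lin _ fD, of "\<lambda>v. c + p v"] cp by simp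
    then show ?thesis using qeq pD cp by simp
  next
    case False
    have "{v. q v \<noteq> 0} \<subseteq> {v. f v \<noteq> 0}" using False by (auto simp: q_def)
    then have "finitely_supported q" using ffs unfolding finitely_supported_def by (rule finite_subset)
    then have qD: "q \<in> Dom" using fsD by blast
    have fc: "(\<lambda>v. f v - c) \<in> Dom \<and> L (\<lambda>v. f v - c) = (\<lambda>v. L f v - 0)"
      using lin_diff[OF lin fD, of "\<lambda>_. c"] cst by simp
    have peq: "p = (\<lambda>v. (f v - c) + q v)" unfolding p_def q_def fun_eq_iff by (simp add: max_def)
    have "(\<lambda>v. (f v - c) + q v) \<in> Dom \<and> L (\<lambda>v. (f v - c) + q v) = (\<lambda>v. L (\<lambda>v. f v - c) v + L q v)"
      using lin_add[OF lin _ qD, of "\<lambda>v. f v - c"] fc by simp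
    then show ?thesis using peq qD fc by simp
  qed
  have lp: "lip1 d p" unfolding lip1_def
  proof (intro allI)
    fix a b
    have "\<bar>p a - p b\<bar> \<le> \<bar>(f a - c) - (f b - c)\<bar>" unfolding p_def by (rule max0_lip)
    also have "\<dots> \<le> d a b" using fl unfolding lip1_def by simp
    finally show "\<bar>p a - p b\<bar> \<le> d a b" .
  qed
  have lq: "lip1 d q" unfolding lip1_def
  proof (intro allI)
    fix a b
    have "\<bar>q a - q b\<bar> \<le> \<bar>(c - f a) - (c - f b)\<bar>" unfolding q_def by (rule max0_lip)
    also have "\<dots> = \<bar>f a - f b\<bar>" by (simp add: abs_minus_commute)
    also have "\<dots> \<le> d a b" using fl unfolding lip1_def by simp
    finally show "\<bar>q a - q b\<bar> \<le> d a b" .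
  qed
  have mp: "\<forall>v. p z \<le> p v" by (simp add: p_def c_def)
  have mq: "\<forall>v. q z \<le> q v" by (simp add: q_def c_def)
  have "\<bar>L p z\<bar> \<le> C z" using cmp key lp mp by blast
  moreover have "\<bar>L q z\<bar> \<le> C z" using cmp key lq mq by blast
  ultimately show ?thesis using key by linarith
qed


theorem mainTheorem14:
  fixes E :: "'v \<Rightarrow> 'v \<Rightarrow> bool"
    and d :: "'v \<Rightarrow> 'v \<Rightarrow> real"
    and Dom :: "('v \<Rightarrow> real) set"
    and L :: "('v \<Rightarrow> real) \<Rightarrow> ('v \<Rightarrow> real)"
  assumes "locally_finite_graph E"
    and "graph_distance E d"
    and "complete_dist d"
    and "linear_operator Dom L"
    and "{f. finitely_supported f} \<subseteq> Dom"
    and "rough_differential_operator Dom L"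
    and "two_sided_rough_comparison d Dom L"
  shows "\<forall>x y. x \<noteq> y \<longrightarrow> ORic d L x y \<noteq> \<infinity> \<and> ORic d L x y \<noteq> -\<infinity>"
proof (intro allI impI)
  fix x y :: 'v assume xy: "x \<noteq> y"
  note lf = assms(1) and gd = assms(2) and cd = assms(3) and lin = assms(4) and fsD = assms(5)
    and rd = assms(6)
  note mf = metric_facts[OF gd]
  obtain C where C: "\<forall>x. 0 \<le> C x"
    "\<forall>f x. f \<in> Dom \<and> lip1 d f \<and> (\<forall>v. f x \<le> f v) \<longrightarrow> \<bar>L f x\<bar> \<le> C x"
    using assms(7) unfolding two_sided_rough_comparison_def by blast
  define D where "D = d x y"
  have Dpos: "D > 0" using mf(1,2) xy unfolding D_def by (metis less_eq_real_def)
  have dyx: "d y x = D" using mf(3) unfolding D_def by metis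
  let ?A = "{ereal (nabla d y x (L f)) | f. finitely_supported f \<and> lip1 d f \<and> nabla d x y f = 1}"
  have oric: "ORic d L x y = Inf ?A" unfolding ORic_def by simp
  define f0 where "f0 = (\<lambda>v. max 0 (D - d y v))"
  have "{v. f0 v \<noteq> 0} \<subseteq> reach E d y D"
  proof
    fix v assume "v \<in> {v. f0 v \<noteq> 0}"
    then have "d y v < D" unfolding f0_def by (auto simp: max_def split: if_splits)
    then show "v \<in> reach E d y D" using ball_reach[OF gd] by blast
  qed
  then have fs0: "finitely_supported f0" unfolding finitely_supported_def
    using reach_finite[OF lf gd cd] by (rule finite_subset)
  have lip0: "lip1 d f0" unfolding lip1_def
  proof (intro allI)
    fix a b
    have t1: "d y a \<le> d y b + d b a" and t2: "d y b \<le> d y a + d a b" using mf(4) by blast+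
    have "d b a = d a b" using mf(3) by metis
    then have "\<bar>(D - d y a) - (D - d y b)\<bar> \<le> d a b" using t1 t2 by (simp add: abs_le_iff)
    moreover have "\<bar>max (D - d y a) 0 - max (D - d y b) 0\<bar> \<le> \<bar>(D - d y a) - (D - d y b)\<bar>"
      by (rule max0_lip)
    ultimately show "\<bar>f0 a - f0 b\<bar> \<le> d a b" unfolding f0_def by (simp add: max.commute)
  qed
  have "d y y = 0" using mf(2) by blast
  then have f0y: "f0 y = D" using Dpos unfolding f0_def by simp
  have f0x: "f0 x = 0" using dyx unfolding f0_def by simp
  have nab0: "nabla d x y f0 = 1" unfolding nabla_def using f0y f0x Dpos D_def by simp
  have mem: "ereal (nabla d y x (L f0)) \<in> ?A" using fs0 lip0 nab0 by blast
  have "Inf ?A \<le> ereal (nabla d y x (L f0))" using mem by (rule Inf_lower)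
  then have ninf: "ORic d L x y \<noteq> \<infinity>" using oric by auto
  define B where "B = (- (2 * C x + 2 * C y)) / D"
  have "ereal B \<le> Inf ?A"
  proof (rule Inf_greatest)
    fix z assume "z \<in> ?A"
    then obtain f where f: "z = ereal (nabla d y x (L f))" "finitely_supported f" "lip1 d f" by blast
    have bx: "\<bar>L f x\<bar> \<le> 2 * C x" using comparison_bound[OF lin fsD rd C(2) f(2,3)] .
    have by': "\<bar>L f y\<bar> \<le> 2 * C y" using comparison_bound[OF lin fsD rd C(2) f(2,3)] .
    have "- (2 * C x + 2 * C y) \<le> L f x - L f y" using bx by' by (simp add: abs_le_iff)
    then have "B \<le> (L f x - L f y) / D" unfolding B_def using Dpos
      by (simp add: divide_right_mono)
    then show "ereal B \<le> z" using f(1) dyx unfolding nabla_def by simp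
  qed
  then have "ORic d L x y \<noteq> -\<infinity>" using oric by auto
  with ninf show "ORic d L x y \<noteq> \<infinity> \<and> ORic d L x y \<noteq> -\<infinity>" by blast
qed

end
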